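(* Consider, for $\gamma>0$, the problem $$\min_{\bar v}\ \sum_{t=1}^\tau\mathbb{E}_{\bar w}\big[q_{h_t}(y_t)\big]+\sum_{t=0}^{\tau-1}\Big(q_{g_t}(v_t)+\tfrac{1}{2\gamma}\|v_t\|_2^2\Big)\ \text{ s.t. } y_{t+1}=\Phi_{t,x}^\top y_t+\Phi_{t,u}^\top v_t+\Phi_{t,w}^\top w_t+\varphi_{t,u,w}[v_t,w_t,\cdot],\ y_0=0,$$ with $q_{h_t}(y)=h_{t,x}^\top y+\frac12y^\top H_{t,xx}y$ (up to constants), $H_{t,xx}\succeq0$, $q_{g_t}(v)=g_{t,u}^\top v+\frac12v^\top G_{t,uu}v$, $G_{t,uu}\succeq0$, $w_t\sim\mathcal{N}(0,I_q)$ independent, and $h_{0,x}=0$, $H_{0,xx}=0$. Define the cost-to-go functions by $c_\tau=q_{h_\tau}$ and the Bellman recursion $$c_t(y)=q_{h_t}(y)+\min_{v}\Big\{q_{g_t}(v)+\tfrac{1}{2\gamma}\|v\|_2^2+\mathbb{E}_{w_t}\big[c_{t+1}(\Phi_{t,x}^\top y+\Phi_{t,u}^\top v+\Phi_{t,w}^\top w_t+\varphi_{t,u,w}[v,w_t,\cdot])\big]\Big\}.$$ Then, up to additive constants, $c_t(x)=\frac12x^\top C_{t,xx}x+c_{t,x}^\top x$ with $C_{t,xx}\succeq0$, and the optimal control at time $t$ from state $y_t$ is $v_t^*(y_t)=K_ty_t+k_t$, where $C_{\tau,xx}=H_{\tau,xx}$, $c_{\tau,x}=h_{\tau,x}$ and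 for $t=\tau-1,\ldots,0$: $$w_{t,x}=h_{t,x}+\Phi_{t,x}c_{t+1,x},\quad w_{t,u}=g_{t,u}+\Phi_{t,u}c_{t+1,x}+\sum_{i=1}^q\Psi_{t,i}^\top C_{t+1,xx}\psi_{t,i},$$ $$W_{t,xx}=H_{t,xx}+\Phi_{t,x}C_{t+1,xx}\Phi_{t,x}^\top,\quad W_{t,ux}=\Phi_{t,u}C_{t+1,xx}\Phi_{t,x}^\top,$$ $$W_{t,uu}=G_{t,uu}+\Phi_{t,u}C_{t+1,xx}\Phi_{t,u}^\top+\sum_{i=1}^q\Psi_{t,i}^\top C_{t+1,xx}\Psi_{t,i}+\gamma^{-1}I_p,$$ $$C_{t,xx}=W_{t,xx}-W_{t,ux}^\top W_{t,uu}^{-1}W_{t,ux},\quad c_{t,x}=w_{t,x}-W_{t,ux}^\top W_{t,uu}^{-1}w_{t,u},\quad K_t=-W_{t,uu}^{-1}W_{t,ux},\quad k_t=-W_{t,uu}^{-1}w_{t,u}.$$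
   Context: $\Phi_{t,x}\in\mathbb{R}^{d\times d}$, $\Phi_{t,u}\in\mathbb{R}^{p\times d}$, $\Phi_{t,w}\in\mathbb{R}^{q\times d}$ are given matrices, and $\varphi_{t,u,w}$ is a given bilinear map $\mathbb{R}^p\times\mathbb{R}^q\to\mathbb{R}^d$, written $(v,w)\mapsto\varphi_{t,u,w}[v,w,\cdot]$ (in the application $\varphi_{t,u,w}=\nabla^2_{uw}\phi_t(x_t,u_t,0)$ for noisy dynamics $\phi_t$). The vectors $\psi_{t,1},\ldots,\psi_{t,q}\in\mathbb{R}^d$ are the columns of $\Phi_{t,w}^\top\in\mathbb{R}^{d\times q}$, and $\Psi_{t,i}\in\mathbb{R}^{d\times p}$ is the matrix with $\Psi_{t,i}v=\varphi_{t,u,w}[v,e_i,\cdot]$, $e_i$ the $i$-th canonical vector of $\mathbb{R}^q$. $h_{t,x}\in\mathbb{R}^d$, $g_{t,u}\in\mathbb{R}^p$, $H_{t,xx}$, $G_{t,uu}$ symmetric. *)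

theory Defs
  imports "HOL-Analysis.Analysis" "HOL-Probability.Probability"
begin

definition qform :: "real^'n \<Rightarrow> real^'n^'n \<Rightarrow> real^'n \<Rightarrow> real" where
  "qform a A y = a \<bullet> y + (1/2) * (y \<bullet> (A *v y))"

definition psd :: "real^'n^'n \<Rightarrow> bool" where
  "psd A \<longleftrightarrow> (\<forall>x. 0 \<le> x \<bullet> (A *v x))"

definition gauss_expect :: "(real^'q \<Rightarrow> real) \<Rightarrow> real" where
  "gauss_expect f =
     (\<integral>x. f x \<partial>(density lborel (\<lambda>x::real^'q. \<Prod>i\<in>UNIV. std_normal_density (x $ i))))"

definition Psi_mat :: "(real^'p \<Rightarrow> real^'q \<Rightarrow> real^'d) \<Rightarrow> 'q \<Rightarrow> real^'p^'d" where
  "Psi_mat phi i = matrix (\<lambda>v. phi v (axis i 1))"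

text \<open>psi_i : i-th column of Phi_w^T, i.e. i-th row of Phi_w (Phi_w is q x d).\<close>
definition psi_vec :: "real^'d^'q \<Rightarrow> 'q \<Rightarrow> real^'d" where
  "psi_vec Pw i = Pw $ i"

definition dyn :: "real^'d^'d \<Rightarrow> real^'d^'p \<Rightarrow> real^'d^'q \<Rightarrow> (real^'p \<Rightarrow> real^'q \<Rightarrow> real^'d)
    \<Rightarrow> real^'d \<Rightarrow> real^'p \<Rightarrow> real^'q \<Rightarrow> real^'d" where
  "dyn Px Pu Pw phi y v w = transpose Px *v y + transpose Pu *v v + transpose Pw *v w + phi v w"

definition bellman_obj :: "real \<Rightarrow> real^'p \<Rightarrow> real^'p^'p \<Rightarrow> real^'d^'d \<Rightarrow> real^'d^'p \<Rightarrow> real^'d^'q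
    \<Rightarrow> (real^'p \<Rightarrow> real^'q \<Rightarrow> real^'d) \<Rightarrow> (real^'d \<Rightarrow> real) \<Rightarrow> real^'d \<Rightarrow> real^'p \<Rightarrow> real" where
  "bellman_obj \<gamma> g G Px Pu Pw phi cnext y v =
     qform g G v + 1 / (2 * \<gamma>) * (norm v)\<^sup>2 + gauss_expect (\<lambda>w. cnext (dyn Px Pu Pw phi y v w))"

text \<open>ctg_aux ... tau n = c_{tau - n} (Bellman recursion, backwards from c_tau = q_{h_tau}).\<close>
primrec ctg_aux :: "real \<Rightarrow> (nat \<Rightarrow> real^'d) \<Rightarrow> (nat \<Rightarrow> real^'d^'d) \<Rightarrow> (nat \<Rightarrow> real^'p)
    \<Rightarrow> (nat \<Rightarrow> real^'p^'p) \<Rightarrow> (nat \<Rightarrow> real^'d^'d) \<Rightarrow> (nat \<Rightarrow> real^'d^'p) \<Rightarrow> (nat \<Rightarrow> real^'d^'q)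
    \<Rightarrow> (nat \<Rightarrow> real^'p \<Rightarrow> real^'q \<Rightarrow> real^'d) \<Rightarrow> nat \<Rightarrow> nat \<Rightarrow> real^'d \<Rightarrow> real" where
  "ctg_aux \<gamma> h H g G Px Pu Pw phi \<tau> 0 = qform (h \<tau>) (H \<tau>)"
| "ctg_aux \<gamma> h H g G Px Pu Pw phi \<tau> (Suc n) =
     (let t = \<tau> - Suc n in
       (\<lambda>y. qform (h t) (H t) y +
          (INF v. bellman_obj \<gamma> (g t) (G t) (Px t) (Pu t) (Pw t) (phi t)
                     (ctg_aux \<gamma> h H g G Px Pu Pw phi \<tau> n) y v)))"

definition cost_to_go where
  "cost_to_go \<gamma> h H g G Px Pu Pw phi \<tau> t = ctg_aux \<gamma> h H g G Px Pu Pw phi \<tau> (\<tau> - t)"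

definition W_xx :: "real^'d^'d \<Rightarrow> real^'d^'d \<Rightarrow> real^'d^'d \<Rightarrow> real^'d^'d" where
  "W_xx H Px C1 = H + Px ** C1 ** transpose Px"

definition W_ux :: "real^'d^'d \<Rightarrow> real^'d^'p \<Rightarrow> real^'d^'d \<Rightarrow> real^'d^'p" where
  "W_ux Px Pu C1 = Pu ** C1 ** transpose Px"

definition W_uu :: "real \<Rightarrow> real^'p^'p \<Rightarrow> real^'d^'p \<Rightarrow> (real^'p \<Rightarrow> real^'q \<Rightarrow> real^'d)
    \<Rightarrow> real^'d^'d \<Rightarrow> real^'p^'p" where
  "W_uu \<gamma> G Pu phi C1 = G + Pu ** C1 ** transpose Pu
     + (\<Sum>i\<in>UNIV. transpose (Psi_mat phi i) ** C1 ** Psi_mat phi i) + (1 / \<gamma>) *\<^sub>R mat 1"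

definition w_x :: "real^'d \<Rightarrow> real^'d^'d \<Rightarrow> real^'d \<Rightarrow> real^'d" where
  "w_x h Px c1 = h + Px *v c1"

definition w_u :: "real^'p \<Rightarrow> real^'d^'p \<Rightarrow> real^'d^'q \<Rightarrow> (real^'p \<Rightarrow> real^'q \<Rightarrow> real^'d)
    \<Rightarrow> real^'d^'d \<Rightarrow> real^'d \<Rightarrow> real^'p" where
  "w_u g Pu Pw phi C1 c1 = g + Pu *v c1
     + (\<Sum>i\<in>UNIV. transpose (Psi_mat phi i) *v (C1 *v psi_vec Pw i))"

text \<open>ric_aux ... tau n = (C_{tau-n,xx}, c_{tau-n,x}).\<close>
primrec ric_aux :: "real \<Rightarrow> (nat \<Rightarrow> real^'d) \<Rightarrow> (nat \<Rightarrow> real^'d^'d) \<Rightarrow> (nat \<Rightarrow> real^'p)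
    \<Rightarrow> (nat \<Rightarrow> real^'p^'p) \<Rightarrow> (nat \<Rightarrow> real^'d^'d) \<Rightarrow> (nat \<Rightarrow> real^'d^'p) \<Rightarrow> (nat \<Rightarrow> real^'d^'q)
    \<Rightarrow> (nat \<Rightarrow> real^'p \<Rightarrow> real^'q \<Rightarrow> real^'d) \<Rightarrow> nat \<Rightarrow> nat \<Rightarrow> (real^'d^'d) \<times> (real^'d)" where
  "ric_aux \<gamma> h H g G Px Pu Pw phi \<tau> 0 = (H \<tau>, h \<tau>)"
| "ric_aux \<gamma> h H g G Px Pu Pw phi \<tau> (Suc n) =
     (let t = \<tau> - Suc n;
          C1 = fst (ric_aux \<gamma> h H g G Px Pu Pw phi \<tau> n);
          c1 = snd (ric_aux \<gamma> h H g G Px Pu Pw phi \<tau> n);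
          Wux = W_ux (Px t) (Pu t) C1;
          Wuui = matrix_inv (W_uu \<gamma> (G t) (Pu t) (phi t) C1)
      in (W_xx (H t) (Px t) C1 - transpose Wux ** Wuui ** Wux,
          w_x (h t) (Px t) c1 - transpose Wux *v (Wuui *v w_u (g t) (Pu t) (Pw t) (phi t) C1 c1)))"

definition C_xx where "C_xx \<gamma> h H g G Px Pu Pw phi \<tau> t = fst (ric_aux \<gamma> h H g G Px Pu Pw phi \<tau> (\<tau> - t))"
definition c_x where "c_x \<gamma> h H g G Px Pu Pw phi \<tau> t = snd (ric_aux \<gamma> h H g G Px Pu Pw phi \<tau> (\<tau> - t))"

definition K_gain where
  "K_gain \<gamma> h H g G Px Pu Pw phi \<tau> t =
     (let C1 = C_xx \<gamma> h H g G Px Pu Pw phi \<tau> (Suc t) in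
      - (matrix_inv (W_uu \<gamma> (G t) (Pu t) (phi t) C1) ** W_ux (Px t) (Pu t) C1))"

definition k_gain where
  "k_gain \<gamma> h H g G Px Pu Pw phi \<tau> t =
     (let C1 = C_xx \<gamma> h H g G Px Pu Pw phi \<tau> (Suc t); c1 = c_x \<gamma> h H g G Px Pu Pw phi \<tau> (Suc t) in
      - (matrix_inv (W_uu \<gamma> (G t) (Pu t) (phi t) C1) *v w_u (g t) (Pu t) (Pw t) (phi t) C1 c1))"

end

theory Submission
  imports Defs
begin


lemma Basis_vec_range: "(Basis :: (real^'q) set) = range (\<lambda>j. axis j 1)"
  by (auto simp: Basis_vec_def)

lemma sum_basis_nth:
  fixes f :: "real^'q \<Rightarrow> real"
  shows "(\<Sum>b\<in>Basis. f b *\<^sub>R b) $ i = f (axis i 1)"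
proof -
  have "(\<Sum>b\<in>Basis. f b *\<^sub>R b) $ i = (\<Sum>b\<in>Basis. f b * b $ i)" by (simp add: sum_component)
  also have "\<dots> = (\<Sum>j\<in>UNIV. f (axis j 1) * axis j 1 $ i)"
    unfolding Basis_vec_range by (subst sum.reindex) (auto simp: inj_on_def axis_eq_axis)
  also have "\<dots> = (\<Sum>j\<in>UNIV. if j = i then f (axis i 1) else 0)"
    by (rule sum.cong) (auto simp: axis_def)
  also have "\<dots> = f (axis i 1)" by simp
  finally show ?thesis .
qed

lemma vec_prod_integral:
  fixes F :: "'q::finite \<Rightarrow> real \<Rightarrow> real"
  assumes int: "\<And>i. integrable lborel (F i)"
  shows "integrable lborel (\<lambda>x::real^'q. \<Prod>i\<in>UNIV. F i (x$i))
     \<and> integral\<^sup>L lborel (\<lambda>x::real^'q. \<Prod>i\<in>UNIV. F i (x$i)) = (\<Prod>i\<in>UNIV. integral\<^sup>L lborel (F i))"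
proof -
  let ?ax = "\<lambda>j::'q. axis j (1::real)"
  have inj: "inj ?ax" by (auto simp: inj_on_def axis_eq_axis)
  define G where "G b t = F (inv ?ax b) t" for b t
  have meas[measurable]: "F i \<in> borel_measurable lborel" for i using int by auto
  have measG[measurable]: "G b \<in> borel_measurable lborel" for b unfolding G_def by simp
  interpret product_sigma_finite "\<lambda>_::real^'q. lborel" by (simp add: product_sigma_finite_def lborel.sigma_finite_measure_axioms)
  have intG: "integrable lborel (G b)" for b unfolding G_def by (rule int)
  have eq: "(\<Prod>i\<in>UNIV. F i ((\<Sum>b\<in>Basis. f b *\<^sub>R b) $ i)) = (\<Prod>b\<in>Basis. G b (f b))" for f :: "real^'q \<Rightarrow> real"
    unfolding sum_basis_nth unfolding Basis_vec_range G_def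
    by (subst prod.reindex[OF inj]) (simp add: inv_f_f[OF inj])
  have eqI: "(\<Prod>i\<in>UNIV. integral\<^sup>L lborel (F i)) = (\<Prod>b\<in>Basis. integral\<^sup>L lborel (G b :: real \<Rightarrow> real))"
    unfolding Basis_vec_range G_def
    by (subst prod.reindex[OF inj]) (simp add: inv_f_f[OF inj])
  have m1[measurable]: "(\<lambda>x::real^'q. \<Prod>i\<in>UNIV. F i (x$i)) \<in> borel_measurable borel" by measurable
  have mT[measurable]: "(\<lambda>f. \<Sum>b\<in>Basis. f b *\<^sub>R b) \<in> measurable (\<Pi>\<^sub>M b\<in>(Basis::(real^'q) set). lborel) borel"
    by measurable
  have "integrable (\<Pi>\<^sub>M b\<in>(Basis::(real^'q) set). lborel) (\<lambda>f. \<Prod>b\<in>Basis. G b (f b))"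
    by (rule product_integrable_prod) (auto intro: intG)
  moreover have "integral\<^sup>L (\<Pi>\<^sub>M b\<in>(Basis::(real^'q) set). lborel) (\<lambda>f. \<Prod>b\<in>Basis. G b (f b)) = (\<Prod>b\<in>Basis. integral\<^sup>L lborel (G b))"
    by (rule product_integral_prod) (auto intro: intG)
  ultimately show ?thesis
    apply (subst (1 2) lborel_eq)
    apply (subst integrable_distr_eq[OF mT], simp)
    apply (subst integral_distr[OF mT], simp)
    apply (simp only: eq eqI)
    done
qed

abbreviation "gmu \<equiv> density lborel (\<lambda>x::real^'q. \<Prod>i\<in>UNIV. std_normal_density (x $ i))"

lemma gauss_mono:
  fixes k :: "'q::finite \<Rightarrow> nat"
  shows "integrable (gmu::(real^'q) measure) (\<lambda>x. \<Prod>i\<in>UNIV. (x$i)^(k i))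
     \<and> integral\<^sup>L (gmu::(real^'q) measure) (\<lambda>x. \<Prod>i\<in>UNIV. (x$i)^(k i))
        = (\<Prod>i\<in>UNIV. integral\<^sup>L lborel (\<lambda>t. std_normal_density t * t^(k i)))"
proof -
  have nn: "0 \<le> (\<Prod>i\<in>UNIV. std_normal_density ((x::real^'q) $ i))" for x
    by (rule prod_nonneg) (simp add: normal_density_nonneg)
  have eq: "(\<lambda>x::real^'q. (\<Prod>i\<in>UNIV. std_normal_density (x $ i)) *\<^sub>R (\<Prod>i\<in>UNIV. (x$i)^(k i)))
     = (\<lambda>x. \<Prod>i\<in>UNIV. std_normal_density (x $ i) * (x$i)^(k i))"
    by (simp add: prod.distrib)
  have V: "integrable lborel (\<lambda>x::real^'q. \<Prod>i\<in>UNIV. std_normal_density (x $ i) * (x$i)^(k i))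
     \<and> integral\<^sup>L lborel (\<lambda>x::real^'q. \<Prod>i\<in>UNIV. std_normal_density (x $ i) * (x$i)^(k i))
       = (\<Prod>i\<in>UNIV. integral\<^sup>L lborel (\<lambda>t. std_normal_density t * t^(k i)))"
    using vec_prod_integral[of "\<lambda>i t. std_normal_density t * t^(k i)"]
    by (simp add: integrable_std_normal_moment)
  show ?thesis
    apply (subst integrable_density, simp, simp, simp add: nn)
    apply (subst integral_density, simp, simp, simp add: nn)
    apply (simp only: eq V)
    done
qed

lemma mom0: "integral\<^sup>L lborel (\<lambda>t. std_normal_density t * t^0) = 1"
  using integral_std_normal_moment_even[of 0] by simp
lemma mom1: "integral\<^sup>L lborel (\<lambda>t. std_normal_density t * t^1) = 0"
  using integral_std_normal_moment_odd[of 0] by simp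
lemma mom1': "integral\<^sup>L lborel (\<lambda>t. std_normal_density t * t) = 0"
  using mom1 by simp
lemma mom2: "integral\<^sup>L lborel (\<lambda>t. std_normal_density t * t^2) = 1"
  using integral_std_normal_moment_even[of 1] by simp

lemma gauss_one: "integrable (gmu::(real^'q::finite) measure) (\<lambda>x. 1::real) \<and> integral\<^sup>L (gmu::(real^'q) measure) (\<lambda>x. 1::real) = 1"
proof -
  have e: "(\<Prod>l\<in>UNIV. (x$l)^0) = (1::real)" for x::"real^'q" by simp
  have z: "(\<Prod>l\<in>(UNIV::'q set). integral\<^sup>L lborel (\<lambda>t. std_normal_density t * t^0)) = 1"
    by (simp only: mom0 prod.neutral_const)
  show ?thesis using gauss_mono[where k="\<lambda>_::'q. 0"] by (simp only: e z)
qed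

lemma gauss_lin: "integrable (gmu::(real^'q::finite) measure) (\<lambda>x. x$i) \<and> integral\<^sup>L (gmu::(real^'q) measure) (\<lambda>x. x$i) = 0"
proof -
  have e: "(\<Prod>l\<in>UNIV. (x$l)^(if l = i then 1 else 0)) = x$i" for x :: "real^'q"
  proof -
    have "(\<Prod>l\<in>UNIV. (x$l)^(if l = i then 1 else 0)) = (\<Prod>l\<in>UNIV. if l = i then x$l else 1)"
      by (rule prod.cong) auto
    then show ?thesis by (simp add: prod.delta)
  qed
  have z: "(\<Prod>l\<in>UNIV. integral\<^sup>L lborel (\<lambda>t. std_normal_density t * t^(if l = i then 1 else 0))) = 0"
    by (rule prod_zero) (use mom1 in \<open>auto intro!: bexI[where x=i]\<close>)
  show ?thesis using gauss_mono[where k="\<lambda>l::'q. if l = i then 1 else 0"] by (simp only: e z)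
qed

lemma gauss_sq: "integrable (gmu::(real^'q::finite) measure) (\<lambda>x. x$i * x$j) \<and>
   integral\<^sup>L (gmu::(real^'q) measure) (\<lambda>x. x$i * x$j) = (if i = j then 1 else 0)"
proof -
  let ?k = "\<lambda>l. (if l = i then 1 else 0) + (if l = j then 1 else (0::nat))"
  have e: "(\<Prod>l\<in>UNIV. (x$l)^(?k l)) = x$i * x$j" for x :: "real^'q"
  proof -
    have "(\<Prod>l\<in>UNIV. (x$l)^(?k l)) = (\<Prod>l\<in>UNIV. (if l = i then x$l else 1) * (if l = j then x$l else 1))"
      by (rule prod.cong) (auto simp: power_add)
    then show ?thesis by (simp add: prod.distrib prod.delta)
  qed
  have z: "(\<Prod>l\<in>UNIV. integral\<^sup>L lborel (\<lambda>t. std_normal_density t * t^(?k l))) = (if i = j then 1 else 0)"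
  proof (cases "i = j")
    case True
    have "(\<Prod>l\<in>UNIV. integral\<^sup>L lborel (\<lambda>t. std_normal_density t * t^(?k l))) = (\<Prod>l\<in>(UNIV::'q set). 1)"
    proof (rule prod.cong)
      fix l :: 'q
      show "integral\<^sup>L lborel (\<lambda>t. std_normal_density t * t^(?k l)) = 1"
      proof (cases "l = i")
        case T: True
        then have "?k l = 2" using True by simp
        then show ?thesis by (simp only: mom2)
      next
        case F: False
        then have "?k l = 0" using True by simp
        then show ?thesis by (simp only: mom0)
      qed
    qed simp
    then show ?thesis using True by simp
  next
    case False
    have "(\<Prod>l\<in>UNIV. integral\<^sup>L lborel (\<lambda>t. std_normal_density t * t^(?k l))) = 0"
      by (rule prod_zero) (use False mom1' in \<open>auto intro!: bexI[where x=i]\<close>)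
    then show ?thesis using False by simp
  qed
  show ?thesis using gauss_mono[where k="?k"] by (simp only: e z)
qed

lemma gauss_quad:
  fixes b :: "'q::finite \<Rightarrow> real" and M :: "'q \<Rightarrow> 'q \<Rightarrow> real"
  shows "gauss_expect (\<lambda>w::real^'q. a + (\<Sum>i\<in>UNIV. b i * w$i) + (\<Sum>i\<in>UNIV. \<Sum>j\<in>UNIV. M i j * (w$i * w$j)))
     = a + (\<Sum>i\<in>UNIV. M i i)"
proof -
  have gauss_one: "integrable (gmu::(real^'q) measure) (\<lambda>x. 1::real) \<and> integral\<^sup>L (gmu::(real^'q) measure) (\<lambda>x. 1::real) = 1"
    by (rule gauss_one)
  have gauss_lin: "integrable (gmu::(real^'q) measure) (\<lambda>x. x$i) \<and> integral\<^sup>L (gmu::(real^'q) measure) (\<lambda>x. x$i) = 0" for i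
    by (rule gauss_lin)
  have gauss_sq: "integrable (gmu::(real^'q) measure) (\<lambda>x. x$i * x$j) \<and>
   integral\<^sup>L (gmu::(real^'q) measure) (\<lambda>x. x$i * x$j) = (if i = j then 1 else 0)" for i j
    by (rule gauss_sq)
  have I0: "integrable (gmu::(real^'q) measure) (\<lambda>x. a * 1)" 
    by (rule integrable_mult_right) (use gauss_one in blast)
  have I1: "integrable (gmu::(real^'q) measure) (\<lambda>x. a)" using I0 by simp
  have A: "integral\<^sup>L (gmu::(real^'q) measure) (\<lambda>x. a) = a"
  proof -
    have "integral\<^sup>L (gmu::(real^'q) measure) (\<lambda>x. a * 1) = a * integral\<^sup>L (gmu::(real^'q) measure) (\<lambda>x. 1)"
      by (rule integral_mult_right_zero)
    then show ?thesis using gauss_one by simp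
  qed
  have I2: "integrable (gmu::(real^'q) measure) (\<lambda>w. \<Sum>i\<in>UNIV. b i * w$i)"
    by (intro Bochner_Integration.integrable_sum Bochner_Integration.integrable_mult_right) (use gauss_lin in blast)
  have I3: "integrable (gmu::(real^'q) measure) (\<lambda>w. \<Sum>i\<in>UNIV. \<Sum>j\<in>UNIV. M i j * (w$i * w$j))" 
    by (intro Bochner_Integration.integrable_sum Bochner_Integration.integrable_mult_right) (use gauss_sq in blast)
  have B: "integral\<^sup>L gmu (\<lambda>w::real^'q. \<Sum>i\<in>UNIV. b i * w$i) = 0"
  proof -
    have "integral\<^sup>L gmu (\<lambda>w::real^'q. \<Sum>i\<in>UNIV. b i * w$i) = (\<Sum>i\<in>UNIV. integral\<^sup>L gmu (\<lambda>w::real^'q. b i * w$i))"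
      by (rule Bochner_Integration.integral_sum) (intro integrable_mult_right, use gauss_lin in blast)
    also have "\<dots> = 0" using gauss_lin by simp
    finally show ?thesis .
  qed
  have C: "integral\<^sup>L gmu (\<lambda>w::real^'q. \<Sum>j\<in>UNIV. M i j * (w$i * w$j)) = M i i" for i
  proof -
    have "integral\<^sup>L gmu (\<lambda>w::real^'q. \<Sum>j\<in>UNIV. M i j * (w$i * w$j)) = (\<Sum>j\<in>UNIV. integral\<^sup>L gmu (\<lambda>w::real^'q. M i j * (w$i * w$j)))"
      by (rule Bochner_Integration.integral_sum) (intro integrable_mult_right, use gauss_sq in blast)
    also have "\<dots> = (\<Sum>j\<in>UNIV. M i j * (if i = j then 1 else 0))" using gauss_sq by simp
    also have "\<dots> = M i i" by (simp add: if_distrib cong: if_cong)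
    finally show ?thesis .
  qed
  have D: "integral\<^sup>L gmu (\<lambda>w::real^'q. \<Sum>i\<in>UNIV. \<Sum>j\<in>UNIV. M i j * (w$i * w$j)) = (\<Sum>i\<in>UNIV. M i i)"
  proof -
    have "integral\<^sup>L gmu (\<lambda>w::real^'q. \<Sum>i\<in>UNIV. \<Sum>j\<in>UNIV. M i j * (w$i * w$j))
       = (\<Sum>i\<in>UNIV. integral\<^sup>L gmu (\<lambda>w::real^'q. \<Sum>j\<in>UNIV. M i j * (w$i * w$j)))"
      by (rule Bochner_Integration.integral_sum) (intro Bochner_Integration.integrable_sum Bochner_Integration.integrable_mult_right, use gauss_sq in blast)
    then show ?thesis by (simp only: C)
  qed
  have "gauss_expect (\<lambda>w::real^'q. a + (\<Sum>i\<in>UNIV. b i * w$i) + (\<Sum>i\<in>UNIV. \<Sum>j\<in>UNIV. M i j * (w$i * w$j)))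
     = integral\<^sup>L gmu (\<lambda>w::real^'q. a + (\<Sum>i\<in>UNIV. b i * w$i)) 
       + integral\<^sup>L gmu (\<lambda>w::real^'q. \<Sum>i\<in>UNIV. \<Sum>j\<in>UNIV. M i j * (w$i * w$j))"
    unfolding gauss_expect_def by (rule Bochner_Integration.integral_add[OF Bochner_Integration.integrable_add[OF I1 I2] I3])
  also have "integral\<^sup>L gmu (\<lambda>w::real^'q. a + (\<Sum>i\<in>UNIV. b i * w$i)) = a"
    using Bochner_Integration.integral_add[OF I1 I2] A B by simp
  finally show ?thesis using D by simp
qed




declare transpose_matrix_vector[simp del]

lemma inner_transpose: "(x::real^'n) \<bullet> (transpose A *v y) = (A *v x) \<bullet> y"
  by (metis dot_lmul_matrix inner_commute transpose_matrix_vector)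

lemma inner_mv: "(x::real^'n) \<bullet> (A *v y) = (transpose A *v x) \<bullet> y"
  using inner_transpose[of x "transpose A" y] by simp

lemma sum_matrix_vector: "finite S \<Longrightarrow> (\<Sum>i\<in>S. M i) *v (v::real^'n) = (\<Sum>i\<in>S. M i *v v)"
  by (induction S rule: finite_induct) (simp add: vec_eq_iff matrix_vector_mult_def, simp add: matrix_vector_mult_add_rdistrib)

lemma transpose_add: "transpose (A + B) = transpose A + (transpose B :: real^'n^'m)"
  by (simp add: transpose_def vec_eq_iff)
lemma transpose_diff: "transpose (A - B) = transpose A - (transpose B :: real^'n^'m)"
  by (simp add: transpose_def vec_eq_iff)
lemma transpose_sum: "finite S \<Longrightarrow> transpose (\<Sum>i\<in>S. M i) = (\<Sum>i\<in>S. transpose (M i) :: real^'n^'m)"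
  by (induction S rule: finite_induct) (auto simp: transpose_add, simp add: transpose_def vec_eq_iff)

lemma sym_inner:
  assumes "transpose C = C"
  shows "(x::real^'n) \<bullet> (C *v z) = z \<bullet> (C *v x)"
  using inner_transpose[of x C z] assms by (simp add: inner_commute)

lemma obj_expand:
  fixes C :: "real^'d^'d" and v :: "real^'p" and y :: "real^'d"
  assumes symC: "transpose C = C"
  shows "(1/2) * ((transpose Px *v y + transpose Pu *v v) \<bullet> (C *v (transpose Px *v y + transpose Pu *v v)))
     + c \<bullet> (transpose Px *v y + transpose Pu *v v)
     + (1/2) * (\<Sum>i\<in>UNIV. (psi_vec Pw i + Psi_mat phi i *v v) \<bullet> (C *v (psi_vec Pw i + Psi_mat phi i *v v)))
     + qform g G v + 1 / (2 * \<gamma>) * (norm v)\<^sup>2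
   = (1/2) * (v \<bullet> (W_uu \<gamma> G Pu phi C *v v)) + v \<bullet> (W_ux Px Pu C *v y + w_u g Pu Pw phi C c)
     + ((1/2) * ((transpose Px *v y) \<bullet> (C *v (transpose Px *v y))) + c \<bullet> (transpose Px *v y)
        + (1/2) * (\<Sum>i\<in>UNIV. psi_vec Pw i \<bullet> (C *v psi_vec Pw i)))"
proof -
  let ?p = "transpose Px *v y" and ?q = "transpose Pu *v v"
  let ?s = "\<lambda>i. psi_vec Pw i" and ?S = "\<lambda>i. Psi_mat phi i *v v"
  have sC: "\<And>x z. (x::real^'d) \<bullet> (C *v z) = z \<bullet> (C *v x)" by (rule sym_inner[OF symC])
  have e1: "(?p + ?q) \<bullet> (C *v (?p + ?q)) = ?p \<bullet> (C *v ?p) + 2 * (?q \<bullet> (C *v ?p)) + ?q \<bullet> (C *v ?q)"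
    by (simp add: inner_add_left inner_add_right matrix_vector_right_distrib sC[of ?p ?q])
  have e2: "(?s i + ?S i) \<bullet> (C *v (?s i + ?S i)) = ?s i \<bullet> (C *v ?s i) + 2 * (?S i \<bullet> (C *v ?s i)) + ?S i \<bullet> (C *v ?S i)" for i
    by (simp add: inner_add_left inner_add_right matrix_vector_right_distrib sC[of "?s i" "?S i"])
  have e3: "v \<bullet> (W_uu \<gamma> G Pu phi C *v v) = v \<bullet> (G *v v) + ?q \<bullet> (C *v ?q) + (\<Sum>i\<in>UNIV. ?S i \<bullet> (C *v ?S i)) + (1/\<gamma>) * (v \<bullet> v)"
    unfolding W_uu_def
    by (simp add: matrix_vector_mult_add_rdistrib sum_matrix_vector inner_add_right inner_sum_right
         matrix_vector_mul_assoc[symmetric] inner_mv[of v Pu] inner_mv[of v "transpose _"] scaleR_matrix_vector_assoc[symmetric]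
         del: transpose_matrix_vector)
  have e4: "v \<bullet> (W_ux Px Pu C *v y) = ?q \<bullet> (C *v ?p)"
    unfolding W_ux_def by (simp add: matrix_vector_mul_assoc[symmetric] inner_mv[of v Pu] del: transpose_matrix_vector)
  have e5: "v \<bullet> w_u g Pu Pw phi C c = g \<bullet> v + ?q \<bullet> c + (\<Sum>i\<in>UNIV. ?S i \<bullet> (C *v ?s i))"
    unfolding w_u_def
    by (simp add: inner_add_right inner_sum_right inner_mv[of v Pu] inner_mv[of v "transpose _"] inner_commute
         del: transpose_matrix_vector)
  show ?thesis
    unfolding qform_def
    apply (simp only: e1 e2 e3 inner_add_right e4 e5 sum.distrib power2_norm_eq_inner)
    apply (simp add: algebra_simps sum_distrib_left inner_commute del: transpose_matrix_vector)
    done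
qed

lemma linear_expand:
  fixes f :: "real^'q \<Rightarrow> real^'d"
  assumes "linear f"
  shows "f w = (\<Sum>i\<in>UNIV. w$i *\<^sub>R f (axis i 1))"
proof -
  have "f w = f (\<Sum>i\<in>UNIV. w$i *\<^sub>R axis i 1)"
    using basis_expansion[of w] by (simp add: scalar_mult_eq_scaleR)
  also have "\<dots> = (\<Sum>i\<in>UNIV. w$i *\<^sub>R f (axis i 1))"
    by (simp add: linear_sum[OF assms] linear_cmul[OF assms])
  finally show ?thesis .
qed

lemma Pw_expand: "transpose Pw *v (w::real^'q) = (\<Sum>i\<in>UNIV. w$i *\<^sub>R psi_vec (Pw::real^'d^'q) i)"
  by (simp add: vec_eq_iff transpose_matrix_vector vector_matrix_mult_def sum_component psi_vec_def mult.commute)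

lemma Psi_mat_works:
  assumes "bilinear phi"
  shows "Psi_mat phi i *v v = phi v (axis i 1)"
proof -
  have "linear (\<lambda>v. phi v (axis i 1))" using assms by (simp add: bilinear_def)
  then show ?thesis unfolding Psi_mat_def by (simp add: matrix_vector_mul(2))
qed

lemma dyn_expand:
  assumes "bilinear phi"
  shows "dyn Px Pu Pw phi y v w = (transpose Px *v y + transpose Pu *v v)
     + (\<Sum>i\<in>UNIV. w$i *\<^sub>R (psi_vec Pw i + Psi_mat phi i *v v))"
proof -
  have "linear (phi v)" using assms by (simp add: bilinear_def)
  then have "phi v w = (\<Sum>i\<in>UNIV. w$i *\<^sub>R phi v (axis i 1))" by (rule linear_expand)
  then show ?thesis unfolding dyn_def Pw_expand Psi_mat_works[OF assms]
    by (simp add: scaleR_add_right sum.distrib add.assoc)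
qed

lemma quad_pointwise:
  fixes C :: "real^'d^'d" and a :: "'q::finite \<Rightarrow> real^'d"
  assumes symC: "transpose C = C"
  shows "(1/2) * ((m + (\<Sum>i\<in>UNIV. w$i *\<^sub>R a i)) \<bullet> (C *v (m + (\<Sum>i\<in>UNIV. w$i *\<^sub>R a i))))
      + c \<bullet> (m + (\<Sum>i\<in>UNIV. w$i *\<^sub>R a i)) + k
    = ((1/2) * (m \<bullet> (C *v m)) + c \<bullet> m + k) + (\<Sum>i\<in>UNIV. (a i \<bullet> (C *v m) + c \<bullet> a i) * w$i)
      + (\<Sum>i\<in>UNIV. \<Sum>j\<in>UNIV. ((1/2) * (a j \<bullet> (C *v a i))) * (w$i * w$j))"
proof -
  let ?u = "\<Sum>i\<in>UNIV. w$i *\<^sub>R a i"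
  have sC: "\<And>x z. (x::real^'d) \<bullet> (C *v z) = z \<bullet> (C *v x)" by (rule sym_inner[OF symC])
  have e1: "(m + ?u) \<bullet> (C *v (m + ?u)) = m \<bullet> (C *v m) + 2 * (?u \<bullet> (C *v m)) + ?u \<bullet> (C *v ?u)"
    by (simp add: inner_add_left inner_add_right matrix_vector_right_distrib sC[of m ?u])
  have e2: "?u \<bullet> (C *v m) = (\<Sum>i\<in>UNIV. (a i \<bullet> (C *v m)) * w$i)"
    by (simp add: inner_sum_left mult.commute)
  have e3: "c \<bullet> ?u = (\<Sum>i\<in>UNIV. (c \<bullet> a i) * w$i)"
    by (simp add: inner_sum_right mult.commute)
  have e4: "?u \<bullet> (C *v ?u) = (\<Sum>i\<in>UNIV. \<Sum>j\<in>UNIV. (a j \<bullet> (C *v a i)) * (w$i * w$j))"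
    by (simp add: inner_sum_left inner_sum_right vec.sum matrix_scaleR_vector_ac sum_distrib_left mult_ac
         scaleR_matrix_vector_assoc[symmetric])
  show ?thesis
    unfolding inner_add_right e1 e2 e3 e4
    by (simp add: algebra_simps sum.distrib sum_distrib_left)
qed

lemma expect_quad:
  fixes C :: "real^'d^'d" and phi :: "real^'p \<Rightarrow> real^'q::finite \<Rightarrow> real^'d"
  assumes symC: "transpose C = C" and bl: "bilinear phi"
  shows "gauss_expect (\<lambda>w. (1/2) * (dyn Px Pu Pw phi y v w \<bullet> (C *v dyn Px Pu Pw phi y v w)) + c \<bullet> dyn Px Pu Pw phi y v w + k)
    = (1/2) * ((transpose Px *v y + transpose Pu *v v) \<bullet> (C *v (transpose Px *v y + transpose Pu *v v)))
     + c \<bullet> (transpose Px *v y + transpose Pu *v v) + k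
     + (1/2) * (\<Sum>i\<in>UNIV. (psi_vec Pw i + Psi_mat phi i *v v) \<bullet> (C *v (psi_vec Pw i + Psi_mat phi i *v v)))"
proof -
  let ?m = "transpose Px *v y + transpose Pu *v v"
  let ?a = "\<lambda>i. psi_vec Pw i + Psi_mat phi i *v v"
  have "(\<lambda>w. (1/2) * (dyn Px Pu Pw phi y v w \<bullet> (C *v dyn Px Pu Pw phi y v w)) + c \<bullet> dyn Px Pu Pw phi y v w + k)
     = (\<lambda>w. ((1/2) * (?m \<bullet> (C *v ?m)) + c \<bullet> ?m + k) + (\<Sum>i\<in>UNIV. (?a i \<bullet> (C *v ?m) + c \<bullet> ?a i) * w$i)
      + (\<Sum>i\<in>UNIV. \<Sum>j\<in>UNIV. ((1/2) * (?a j \<bullet> (C *v ?a i))) * (w$i * w$j)))"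
    unfolding dyn_expand[OF bl] by (rule ext, rule quad_pointwise[OF symC])
  then show ?thesis unfolding gauss_quad by (simp only: gauss_quad) (simp add: sum_distrib_left)
qed

lemma bellman_obj_quad:
  fixes C :: "real^'d^'d" and phi :: "real^'p \<Rightarrow> real^'q::finite \<Rightarrow> real^'d"
  assumes symC: "transpose C = C" and bl: "bilinear phi"
  shows "bellman_obj \<gamma> g G Px Pu Pw phi (\<lambda>x. (1/2) * (x \<bullet> (C *v x)) + c \<bullet> x + k) y v
   = (1/2) * (v \<bullet> (W_uu \<gamma> G Pu phi C *v v)) + v \<bullet> (W_ux Px Pu C *v y + w_u g Pu Pw phi C c)
     + ((1/2) * ((transpose Px *v y) \<bullet> (C *v (transpose Px *v y))) + c \<bullet> (transpose Px *v y)
        + (1/2) * (\<Sum>i\<in>UNIV. psi_vec Pw i \<bullet> (C *v psi_vec Pw i))) + k"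
  unfolding bellman_obj_def expect_quad[OF symC bl]
  using obj_expand[OF symC, of Px y Pu v c Pw phi g G \<gamma>] by simp

lemma mat_inv_props:
  fixes W :: "real^'p^'p"
  assumes symW: "transpose W = W" and pd: "\<And>v. v \<noteq> 0 \<Longrightarrow> 0 < v \<bullet> (W *v v)"
  shows "W ** matrix_inv W = mat 1" "matrix_inv W ** W = mat 1" "transpose (matrix_inv W) = matrix_inv W"
proof -
  have "inj ((*v) W)"
    unfolding vec.inj_iff_eq_0
  proof (intro allI impI)
    fix x assume "W *v x = 0"
    then show "x = 0" using pd[of x] by (cases "x = 0") auto
  qed
  then have "invertible W" using invertible_left_inverse matrix_left_invertible_injective by blast
  then have "\<exists>A'. W ** A' = mat 1 \<and> A' ** W = mat 1" by (simp add: invertible_def)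
  then have inv: "W ** matrix_inv W = mat 1 \<and> matrix_inv W ** W = mat 1"
    unfolding matrix_inv_def by (rule someI_ex)
  then show "W ** matrix_inv W = mat 1" "matrix_inv W ** W = mat 1" by auto
  have "transpose (matrix_inv W) ** W = mat 1"
    using arg_cong[OF conjunct1[OF inv], of transpose] by (simp add: matrix_transpose_mul symW)
  then have "transpose (matrix_inv W) = transpose (matrix_inv W) ** (W ** matrix_inv W)"
    using inv by (simp add: matrix_mul_rid)
  also have "\<dots> = matrix_inv W"
    by (simp add: matrix_mul_assoc \<open>transpose (matrix_inv W) ** W = mat 1\<close> matrix_mul_lid)
  finally show "transpose (matrix_inv W) = matrix_inv W" .
qed

lemma quad_min:
  fixes W :: "real^'p^'p"
  assumes symW: "transpose W = W" and pd: "\<And>v. v \<noteq> 0 \<Longrightarrow> 0 < v \<bullet> (W *v v)"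
  shows "(1/2) * (v \<bullet> (W *v v)) + v \<bullet> b
     = - (1/2) * (b \<bullet> (matrix_inv W *v b)) + (1/2) * ((v + matrix_inv W *v b) \<bullet> (W *v (v + matrix_inv W *v b)))"
proof -
  note I = mat_inv_props[OF symW pd]
  let ?z = "matrix_inv W *v b"
  have Wz: "W *v ?z = b" using I(1) by (simp add: matrix_vector_mul_assoc)
  have sW: "\<And>x z. (x::real^'p) \<bullet> (W *v z) = z \<bullet> (W *v x)" by (rule sym_inner[OF symW])
  show ?thesis
    by (simp add: inner_add_left inner_add_right matrix_vector_right_distrib Wz sW[of ?z v] inner_commute[of b]
          algebra_simps)
qed

lemma Wuu_quad:
  "v \<bullet> (W_uu \<gamma> G Pu phi C *v v) = v \<bullet> (G *v v) + (transpose Pu *v v) \<bullet> (C *v (transpose Pu *v v))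
     + (\<Sum>i\<in>UNIV. (Psi_mat phi i *v v) \<bullet> (C *v (Psi_mat phi i *v v))) + (1/\<gamma>) * (v \<bullet> v)"
  unfolding W_uu_def
  by (simp add: matrix_vector_mult_add_rdistrib sum_matrix_vector inner_add_right inner_sum_right
         matrix_vector_mul_assoc[symmetric] inner_mv[of v Pu] inner_mv[of v "transpose _"] scaleR_matrix_vector_assoc[symmetric])

lemma Wuu_pd:
  assumes "\<gamma> > 0" "psd G" "psd C" "v \<noteq> 0"
  shows "0 < v \<bullet> (W_uu \<gamma> G Pu phi C *v v)"
proof -
  have "0 \<le> v \<bullet> (G *v v)" using assms(2) by (simp add: psd_def)
  moreover have "0 \<le> (transpose Pu *v v) \<bullet> (C *v (transpose Pu *v v))" using assms(3) by (simp add: psd_def)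
  moreover have "0 \<le> (\<Sum>i\<in>UNIV. (Psi_mat phi i *v v) \<bullet> (C *v (Psi_mat phi i *v v)))"
    using assms(3) by (intro sum_nonneg) (simp add: psd_def)
  moreover have "0 < (1/\<gamma>) * (v \<bullet> v)" using assms(1,4) by simp
  ultimately show ?thesis unfolding Wuu_quad by linarith
qed

lemma Wuu_sym:
  assumes "transpose G = G" "transpose C = C"
  shows "transpose (W_uu \<gamma> G Pu phi C) = W_uu \<gamma> G Pu phi C"
  unfolding W_uu_def
  by (simp add: transpose_add transpose_sum transpose_scalar matrix_transpose_mul assms matrix_mul_assoc)

lemma Wxx_sym:
  assumes "transpose H = H" "transpose C = C"
  shows "transpose (W_xx H Px C) = W_xx H Px C"
  unfolding W_xx_def
  by (simp add: transpose_add matrix_transpose_mul assms matrix_mul_assoc)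

lemma neg_matrix_vector: "(- A) *v (x::real^'n) = - (A *v x)"
  by (simp add: vec_eq_iff matrix_vector_mult_def sum_negf)

lemma step:
  fixes Cp :: "real^'d^'d" and phi :: "real^'p \<Rightarrow> real^'q::finite \<Rightarrow> real^'d"
    and Px :: "real^'d^'d" and Pu :: "real^'d^'p" and Pw :: "real^'d^'q" and g :: "real^'p" and G :: "real^'p^'p"
    and H :: "real^'d^'d" and h :: "real^'d" and cp :: "real^'d" and \<gamma> :: real and \<kappa> :: real and y :: "real^'d"
  assumes gpos: "\<gamma> > 0" and sC: "transpose Cp = Cp" and pC: "psd Cp" and sH: "transpose H = H" and pH: "psd H"
    and sG: "transpose G = G" and pG: "psd G" and bl: "bilinear phi"
  defines "Wuu \<equiv> W_uu \<gamma> G Pu phi Cp" and "Wux \<equiv> W_ux Px Pu Cp" and "wu \<equiv> w_u g Pu Pw phi Cp cp"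
    and "Wi \<equiv> matrix_inv (W_uu \<gamma> G Pu phi Cp)"
  shows "transpose (W_xx H Px Cp - transpose Wux ** Wi ** Wux) = W_xx H Px Cp - transpose Wux ** Wi ** Wux"
    and "psd (W_xx H Px Cp - transpose Wux ** Wi ** Wux)"
    and "\<exists>\<kappa>'. \<forall>y. qform h H y + (INF v. bellman_obj \<gamma> g G Px Pu Pw phi (\<lambda>x. (1/2) * (x \<bullet> (Cp *v x)) + cp \<bullet> x + \<kappa>) y v)
           = (1/2) * (y \<bullet> ((W_xx H Px Cp - transpose Wux ** Wi ** Wux) *v y)) + (w_x h Px cp - transpose Wux *v (Wi *v wu)) \<bullet> y + \<kappa>'"
    and "(\<forall>v. bellman_obj \<gamma> g G Px Pu Pw phi (\<lambda>x. (1/2) * (x \<bullet> (Cp *v x)) + cp \<bullet> x + \<kappa>) y ((- (Wi ** Wux)) *v y + - (Wi *v wu))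
              \<le> bellman_obj \<gamma> g G Px Pu Pw phi (\<lambda>x. (1/2) * (x \<bullet> (Cp *v x)) + cp \<bullet> x + \<kappa>) y v)
       \<and> (\<forall>v. bellman_obj \<gamma> g G Px Pu Pw phi (\<lambda>x. (1/2) * (x \<bullet> (Cp *v x)) + cp \<bullet> x + \<kappa>) y v
              = bellman_obj \<gamma> g G Px Pu Pw phi (\<lambda>x. (1/2) * (x \<bullet> (Cp *v x)) + cp \<bullet> x + \<kappa>) y ((- (Wi ** Wux)) *v y + - (Wi *v wu))
              \<longrightarrow> v = (- (Wi ** Wux)) *v y + - (Wi *v wu))"
proof -
  have pdW: "\<And>v. v \<noteq> 0 \<Longrightarrow> 0 < v \<bullet> (Wuu *v v)" unfolding Wuu_def using Wuu_pd gpos pG pC by blast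
  have symW: "transpose Wuu = Wuu" unfolding Wuu_def using Wuu_sym sG sC by blast
  have WiW: "Wi = matrix_inv Wuu" unfolding Wi_def Wuu_def ..
  note I = mat_inv_props[OF symW pdW, folded WiW]
  have sWi: "\<And>x z. (x::real^'p) \<bullet> (Wi *v z) = z \<bullet> (Wi *v x)" by (rule sym_inner[OF I(3)])
  let ?Cn = "W_xx H Px Cp - transpose Wux ** Wi ** Wux"
  have CnV: "y \<bullet> (?Cn *v y) = y \<bullet> (H *v y) + (transpose Px *v y) \<bullet> (Cp *v (transpose Px *v y))
      - (Wux *v y) \<bullet> (Wi *v (Wux *v y))" for y
    unfolding W_xx_def
    by (simp add: matrix_vector_mult_diff_rdistrib matrix_vector_mult_add_rdistrib inner_diff_right inner_add_right
          matrix_vector_mul_assoc[symmetric] inner_mv[of y Px] inner_transpose)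
  show "transpose ?Cn = ?Cn"
    using Wxx_sym[OF sH sC, of Px] I(3)
    by (simp add: transpose_diff matrix_transpose_mul matrix_mul_assoc)
  show "psd ?Cn"
    unfolding psd_def
  proof
    fix y :: "real^'d"
    let ?p = "transpose Px *v y" and ?b = "Wux *v y"
    let ?v = "- (Wi *v ?b)"
    have E: "(1/2) * ((?p + transpose Pu *v ?v) \<bullet> (Cp *v (?p + transpose Pu *v ?v)))
     + 0 \<bullet> (?p + transpose Pu *v ?v)
     + (1/2) * (\<Sum>i\<in>UNIV. (psi_vec 0 i + Psi_mat phi i *v ?v) \<bullet> (Cp *v (psi_vec 0 i + Psi_mat phi i *v ?v)))
     + qform 0 G ?v + 1 / (2 * \<gamma>) * (norm ?v)\<^sup>2
   = (1/2) * (?v \<bullet> (Wuu *v ?v)) + ?v \<bullet> (Wux *v y + w_u 0 Pu 0 phi Cp 0)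
     + ((1/2) * (?p \<bullet> (Cp *v ?p)) + 0 \<bullet> ?p
        + (1/2) * (\<Sum>i\<in>UNIV. psi_vec 0 i \<bullet> (Cp *v psi_vec (0::real^'d^'q) i)))"
      unfolding Wuu_def Wux_def by (rule obj_expand[OF sC])
    have z1: "psi_vec (0::real^'d^'q) i = 0" for i by (simp add: psi_vec_def)
    have z2: "w_u 0 Pu (0::real^'d^'q) phi Cp 0 = 0" by (simp add: w_u_def z1)
    have L: "0 \<le> (1/2) * ((?p + transpose Pu *v ?v) \<bullet> (Cp *v (?p + transpose Pu *v ?v)))
     + 0 \<bullet> (?p + transpose Pu *v ?v)
     + (1/2) * (\<Sum>i\<in>UNIV. (psi_vec (0::real^'d^'q) i + Psi_mat phi i *v ?v) \<bullet> (Cp *v (psi_vec 0 i + Psi_mat phi i *v ?v)))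
     + qform 0 G ?v + 1 / (2 * \<gamma>) * (norm ?v)\<^sup>2"
    proof -
      have "0 \<le> (?p + transpose Pu *v ?v) \<bullet> (Cp *v (?p + transpose Pu *v ?v))" using pC by (simp add: psd_def)
      moreover have "0 \<le> (\<Sum>i\<in>UNIV. (psi_vec (0::real^'d^'q) i + Psi_mat phi i *v ?v) \<bullet> (Cp *v (psi_vec 0 i + Psi_mat phi i *v ?v)))"
        using pC by (intro sum_nonneg) (simp add: psd_def)
      moreover have "0 \<le> qform 0 G ?v"
      proof -
        have "0 \<le> ?v \<bullet> (G *v ?v)" using pG unfolding psd_def by blast
        then show ?thesis unfolding qform_def by simp
      qed
      moreover have "0 \<le> 1 / (2 * \<gamma>) * (norm ?v)\<^sup>2" using gpos by simp
      ultimately show ?thesis by simp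
    qed
    have Q: "(1/2) * (?v \<bullet> (Wuu *v ?v)) + ?v \<bullet> ?b = - (1/2) * (?b \<bullet> (Wi *v ?b))"
      using quad_min[OF symW pdW, of ?v ?b, folded WiW] by simp
    have "0 \<le> y \<bullet> (H *v y)" using pH by (simp add: psd_def)
    then show "0 \<le> y \<bullet> (?Cn *v y)"
      using E L Q unfolding CnV by (simp add: z1 z2)
  qed
  define b where "b y = Wux *v y + wu" for y
  define vs where "vs y = (- (Wi ** Wux)) *v y + - (Wi *v wu)" for y
  have vsb: "vs y = - (Wi *v b y)" for y
    unfolding vs_def b_def by (simp add: neg_matrix_vector matrix_vector_right_distrib matrix_vector_mul_assoc)
  define R where "R y = (1/2) * ((transpose Px *v y) \<bullet> (Cp *v (transpose Px *v y))) + cp \<bullet> (transpose Px *v y)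
        + (1/2) * (\<Sum>i\<in>UNIV. psi_vec Pw i \<bullet> (Cp *v psi_vec Pw i))" for y
  let ?obj = "\<lambda>y v. bellman_obj \<gamma> g G Px Pu Pw phi (\<lambda>x. (1/2) * (x \<bullet> (Cp *v x)) + cp \<bullet> x + \<kappa>) y v"
  have objeq: "?obj y v = - (1/2) * (b y \<bullet> (Wi *v b y)) + (1/2) * ((v - vs y) \<bullet> (Wuu *v (v - vs y))) + R y + \<kappa>" for y v
  proof -
    have "?obj y v = (1/2) * (v \<bullet> (Wuu *v v)) + v \<bullet> b y + R y + \<kappa>"
      unfolding bellman_obj_quad[OF sC bl] Wuu_def b_def Wux_def wu_def R_def by simp
    also have "\<dots> = - (1/2) * (b y \<bullet> (Wi *v b y)) + (1/2) * ((v - vs y) \<bullet> (Wuu *v (v - vs y))) + R y + \<kappa>"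
      using quad_min[OF symW pdW, of v "b y", folded WiW] by (simp add: vsb)
    finally show ?thesis .
  qed
  have objvs: "?obj y (vs y) = - (1/2) * (b y \<bullet> (Wi *v b y)) + R y + \<kappa>" for y
    unfolding objeq by simp
  have minp: "?obj y (vs y) \<le> ?obj y v" for y v
  proof -
    have "0 \<le> (v - vs y) \<bullet> (Wuu *v (v - vs y))" using pdW[of "v - vs y"] by (cases "v - vs y = 0") auto
    then show ?thesis unfolding objvs objeq by simp
  qed
  have uniq: "?obj y v = ?obj y (vs y) \<Longrightarrow> v = vs y" for y v
  proof (rule ccontr)
    assume "?obj y v = ?obj y (vs y)" "v \<noteq> vs y"
    then have "0 < (v - vs y) \<bullet> (Wuu *v (v - vs y))" using pdW[of "v - vs y"] by auto
    then show False using \<open>?obj y v = ?obj y (vs y)\<close> unfolding objvs objeq by simp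
  qed
  show "(\<forall>v. ?obj y ((- (Wi ** Wux)) *v y + - (Wi *v wu)) \<le> ?obj y v)
       \<and> (\<forall>v. ?obj y v = ?obj y ((- (Wi ** Wux)) *v y + - (Wi *v wu)) \<longrightarrow> v = (- (Wi ** Wux)) *v y + - (Wi *v wu))"
    using minp uniq unfolding vs_def by blast
  have INF: "(INF v. ?obj y v) = ?obj y (vs y)" for y
  proof (rule cInf_eq_minimum)
    show "?obj y (vs y) \<in> range (?obj y)" by (rule rangeI)
  next
    fix x assume "x \<in> range (?obj y)"
    then obtain v where "x = ?obj y v" by blast
    then show "?obj y (vs y) \<le> x" by (simp only: minp)
  qed
  show "\<exists>\<kappa>'. \<forall>y. qform h H y + (INF v. ?obj y v)
           = (1/2) * (y \<bullet> (?Cn *v y)) + (w_x h Px cp - transpose Wux *v (Wi *v wu)) \<bullet> y + \<kappa>'"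
  proof (intro exI allI)
    fix y :: "real^'d"
    have bb: "b y \<bullet> (Wi *v b y) = (Wux *v y) \<bullet> (Wi *v (Wux *v y)) + 2 * ((Wux *v y) \<bullet> (Wi *v wu)) + wu \<bullet> (Wi *v wu)"
      unfolding b_def by (simp add: inner_add_left inner_add_right matrix_vector_right_distrib sWi[of wu "Wux *v y"])
    have cc: "(w_x h Px cp - transpose Wux *v (Wi *v wu)) \<bullet> y = h \<bullet> y + cp \<bullet> (transpose Px *v y) - (Wux *v y) \<bullet> (Wi *v wu)"
    proof -
      have "(w_x h Px cp - transpose Wux *v (Wi *v wu)) \<bullet> y = y \<bullet> (w_x h Px cp - transpose Wux *v (Wi *v wu))"
        by (rule inner_commute)
      also have "\<dots> = y \<bullet> h + y \<bullet> (Px *v cp) - y \<bullet> (transpose Wux *v (Wi *v wu))"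
        by (simp add: w_x_def inner_diff_right inner_add_right)
      also have "\<dots> = h \<bullet> y + cp \<bullet> (transpose Px *v y) - (Wux *v y) \<bullet> (Wi *v wu)"
        by (simp only: inner_mv[of y Px] inner_transpose inner_commute[of y h] inner_commute[of "transpose Px *v y" cp])
      finally show ?thesis .
    qed
    show "qform h H y + (INF v. ?obj y v)
           = (1/2) * (y \<bullet> (?Cn *v y)) + (w_x h Px cp - transpose Wux *v (Wi *v wu)) \<bullet> y
             + (- (1/2) * (wu \<bullet> (Wi *v wu)) + (1/2) * (\<Sum>i\<in>UNIV. psi_vec Pw i \<bullet> (Cp *v psi_vec Pw i)) + \<kappa>)"
      unfolding INF objvs bb cc CnV R_def qform_def by (simp add: algebra_simps inner_commute[of h])
  qed
qed

lemma main_ind: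
  fixes \<gamma> :: real and \<tau> :: nat
    and h :: "nat \<Rightarrow> real^'d" and H :: "nat \<Rightarrow> real^'d^'d"
    and g :: "nat \<Rightarrow> real^'p" and G :: "nat \<Rightarrow> real^'p^'p"
    and Px :: "nat \<Rightarrow> real^'d^'d" and Pu :: "nat \<Rightarrow> real^'d^'p" and Pw :: "nat \<Rightarrow> real^'d^'q::finite"
    and phi :: "nat \<Rightarrow> real^'p \<Rightarrow> real^'q \<Rightarrow> real^'d"
  assumes gpos: "\<gamma> > 0"
    and HH: "\<forall>t\<le>\<tau>. transpose (H t) = H t \<and> psd (H t)"
    and GG: "\<forall>t<\<tau>. transpose (G t) = G t \<and> psd (G t)"
    and BL: "\<forall>t<\<tau>. bilinear (phi t)"
  shows "n \<le> \<tau> \<Longrightarrow> transpose (fst (ric_aux \<gamma> h H g G Px Pu Pw phi \<tau> n)) = fst (ric_aux \<gamma> h H g G Px Pu Pw phi \<tau> n)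
     \<and> psd (fst (ric_aux \<gamma> h H g G Px Pu Pw phi \<tau> n))
     \<and> (\<exists>\<kappa>. ctg_aux \<gamma> h H g G Px Pu Pw phi \<tau> n = (\<lambda>x. (1/2) * (x \<bullet> (fst (ric_aux \<gamma> h H g G Px Pu Pw phi \<tau> n) *v x))
            + snd (ric_aux \<gamma> h H g G Px Pu Pw phi \<tau> n) \<bullet> x + \<kappa>))"
proof (induction n)
  case 0
  have "ctg_aux \<gamma> h H g G Px Pu Pw phi \<tau> 0 = (\<lambda>x. (1/2) * (x \<bullet> (H \<tau> *v x)) + h \<tau> \<bullet> x + 0)"
    by (simp add: qform_def fun_eq_iff inner_commute)
  moreover have "transpose (H \<tau>) = H \<tau>" "psd (H \<tau>)" using HH by auto
  ultimately show ?case by (simp only: ric_aux.simps fst_conv snd_conv) blast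
next
  case (Suc n)
  let ?t = "\<tau> - Suc n"
  let ?C1 = "fst (ric_aux \<gamma> h H g G Px Pu Pw phi \<tau> n)" and ?c1 = "snd (ric_aux \<gamma> h H g G Px Pu Pw phi \<tau> n)"
  have tl: "?t < \<tau>" using Suc.prems by simp
  from Suc.IH Suc.prems obtain \<kappa> where sC: "transpose ?C1 = ?C1" and pC: "psd ?C1"
    and cn: "ctg_aux \<gamma> h H g G Px Pu Pw phi \<tau> n = (\<lambda>x. (1/2) * (x \<bullet> (?C1 *v x)) + ?c1 \<bullet> x + \<kappa>)" by auto
  have sH: "transpose (H ?t) = H ?t" and pH: "psd (H ?t)" using HH tl by auto
  have sG: "transpose (G ?t) = G ?t" and pG: "psd (G ?t)" using GG tl by auto
  have bl: "bilinear (phi ?t)" using BL tl by auto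
  note S1 = step(1)[where Px="Px ?t" and Pu="Pu ?t", OF gpos sC pC sH pH sG pG bl]
  note S2 = step(2)[where Px="Px ?t" and Pu="Pu ?t", OF gpos sC pC sH pH sG pG bl]
  note S3 = step(3)[where Px="Px ?t" and Pu="Pu ?t" and Pw="Pw ?t" and g="g ?t" and h="h ?t" and cp="?c1" and \<kappa>=\<kappa>, OF gpos sC pC sH pH sG pG bl]
  have R: "ric_aux \<gamma> h H g G Px Pu Pw phi \<tau> (Suc n) =
     (W_xx (H ?t) (Px ?t) ?C1 - transpose (W_ux (Px ?t) (Pu ?t) ?C1) ** matrix_inv (W_uu \<gamma> (G ?t) (Pu ?t) (phi ?t) ?C1) ** W_ux (Px ?t) (Pu ?t) ?C1,
      w_x (h ?t) (Px ?t) ?c1 - transpose (W_ux (Px ?t) (Pu ?t) ?C1) *v (matrix_inv (W_uu \<gamma> (G ?t) (Pu ?t) (phi ?t) ?C1) *v w_u (g ?t) (Pu ?t) (Pw ?t) (phi ?t) ?C1 ?c1))"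
    by (simp add: Let_def)
  have Cg: "ctg_aux \<gamma> h H g G Px Pu Pw phi \<tau> (Suc n) = (\<lambda>y. qform (h ?t) (H ?t) y +
          (INF v. bellman_obj \<gamma> (g ?t) (G ?t) (Px ?t) (Pu ?t) (Pw ?t) (phi ?t) (\<lambda>x. (1/2) * (x \<bullet> (?C1 *v x)) + ?c1 \<bullet> x + \<kappa>) y v))"
    by (simp only: ctg_aux.simps Let_def cn)
  from S3 obtain \<kappa>' where K: "\<forall>y. qform (h ?t) (H ?t) y +
          (INF v. bellman_obj \<gamma> (g ?t) (G ?t) (Px ?t) (Pu ?t) (Pw ?t) (phi ?t) (\<lambda>x. (1/2) * (x \<bullet> (?C1 *v x)) + ?c1 \<bullet> x + \<kappa>) y v)
     = (1/2) * (y \<bullet> (fst (ric_aux \<gamma> h H g G Px Pu Pw phi \<tau> (Suc n)) *v y)) + snd (ric_aux \<gamma> h H g G Px Pu Pw phi \<tau> (Suc n)) \<bullet> y + \<kappa>'"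
    unfolding R fst_conv snd_conv by blast
  show ?case
    unfolding Cg using S1 S2 K unfolding R fst_conv snd_conv by (auto simp: fun_eq_iff)
qed

theorem proposition10:
  fixes \<gamma> :: real and \<tau> :: nat
    and h :: "nat \<Rightarrow> real^'d" and H :: "nat \<Rightarrow> real^'d^'d"
    and g :: "nat \<Rightarrow> real^'p" and G :: "nat \<Rightarrow> real^'p^'p"
    and Px :: "nat \<Rightarrow> real^'d^'d" and Pu :: "nat \<Rightarrow> real^'d^'p" and Pw :: "nat \<Rightarrow> real^'d^'q"
    and phi :: "nat \<Rightarrow> real^'p \<Rightarrow> real^'q \<Rightarrow> real^'d"
  assumes "\<gamma> > 0"
    and "\<forall>t\<le>\<tau>. transpose (H t) = H t \<and> psd (H t)"
    and "\<forall>t<\<tau>. transpose (G t) = G t \<and> psd (G t)"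
    and "\<forall>t<\<tau>. bilinear (phi t)"
    and "h 0 = 0" and "H 0 = 0"
  shows "(\<forall>t\<le>\<tau>.
            transpose (C_xx \<gamma> h H g G Px Pu Pw phi \<tau> t) = C_xx \<gamma> h H g G Px Pu Pw phi \<tau> t \<and>
            psd (C_xx \<gamma> h H g G Px Pu Pw phi \<tau> t) \<and>
            (\<exists>\<kappa>. \<forall>x. cost_to_go \<gamma> h H g G Px Pu Pw phi \<tau> t x
                 = (1/2) * (x \<bullet> (C_xx \<gamma> h H g G Px Pu Pw phi \<tau> t *v x))
                   + c_x \<gamma> h H g G Px Pu Pw phi \<tau> t \<bullet> x + \<kappa>))
       \<and> (\<forall>t<\<tau>. \<forall>y.
            (let vs = K_gain \<gamma> h H g G Px Pu Pw phi \<tau> t *v y + k_gain \<gamma> h H g G Px Pu Pw phi \<tau> t;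
                 obj = bellman_obj \<gamma> (g t) (G t) (Px t) (Pu t) (Pw t) (phi t)
                         (cost_to_go \<gamma> h H g G Px Pu Pw phi \<tau> (Suc t)) y
             in (\<forall>v. obj vs \<le> obj v) \<and> (\<forall>v. obj v = obj vs \<longrightarrow> v = vs)))"
proof -
  note MI = main_ind[where h=h and g=g and Px=Px and Pu=Pu and Pw=Pw, OF assms(1-4)]
  have P1: "\<forall>t\<le>\<tau>.
            transpose (C_xx \<gamma> h H g G Px Pu Pw phi \<tau> t) = C_xx \<gamma> h H g G Px Pu Pw phi \<tau> t \<and>
            psd (C_xx \<gamma> h H g G Px Pu Pw phi \<tau> t) \<and>
            (\<exists>\<kappa>. \<forall>x. cost_to_go \<gamma> h H g G Px Pu Pw phi \<tau> t x
                 = (1/2) * (x \<bullet> (C_xx \<gamma> h H g G Px Pu Pw phi \<tau> t *v x))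
                   + c_x \<gamma> h H g G Px Pu Pw phi \<tau> t \<bullet> x + \<kappa>)"
  proof (intro allI impI)
    fix t assume "t \<le> \<tau>"
    then have "\<tau> - t \<le> \<tau>" by simp
    from MI[OF this] obtain \<kappa> where A1: "transpose (fst (ric_aux \<gamma> h H g G Px Pu Pw phi \<tau> (\<tau> - t))) = fst (ric_aux \<gamma> h H g G Px Pu Pw phi \<tau> (\<tau> - t))"
      and A2: "psd (fst (ric_aux \<gamma> h H g G Px Pu Pw phi \<tau> (\<tau> - t)))"
      and A3: "ctg_aux \<gamma> h H g G Px Pu Pw phi \<tau> (\<tau> - t) = (\<lambda>x. (1/2) * (x \<bullet> (fst (ric_aux \<gamma> h H g G Px Pu Pw phi \<tau> (\<tau> - t)) *v x))
            + snd (ric_aux \<gamma> h H g G Px Pu Pw phi \<tau> (\<tau> - t)) \<bullet> x + \<kappa>)" by blast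
    show "transpose (C_xx \<gamma> h H g G Px Pu Pw phi \<tau> t) = C_xx \<gamma> h H g G Px Pu Pw phi \<tau> t \<and>
            psd (C_xx \<gamma> h H g G Px Pu Pw phi \<tau> t) \<and>
            (\<exists>\<kappa>. \<forall>x. cost_to_go \<gamma> h H g G Px Pu Pw phi \<tau> t x
                 = (1/2) * (x \<bullet> (C_xx \<gamma> h H g G Px Pu Pw phi \<tau> t *v x))
                   + c_x \<gamma> h H g G Px Pu Pw phi \<tau> t \<bullet> x + \<kappa>)"
      unfolding C_xx_def c_x_def cost_to_go_def
      by (intro conjI A1 A2 exI[of _ \<kappa>] allI) (simp only: A3)
  qed
  have P2: "\<forall>t<\<tau>. \<forall>y.
            (let vs = K_gain \<gamma> h H g G Px Pu Pw phi \<tau> t *v y + k_gain \<gamma> h H g G Px Pu Pw phi \<tau> t;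
                 obj = bellman_obj \<gamma> (g t) (G t) (Px t) (Pu t) (Pw t) (phi t)
                         (cost_to_go \<gamma> h H g G Px Pu Pw phi \<tau> (Suc t)) y
             in (\<forall>v. obj vs \<le> obj v) \<and> (\<forall>v. obj v = obj vs \<longrightarrow> v = vs))"
  proof (intro allI impI)
    fix t y assume tl: "t < \<tau>"
    let ?n = "\<tau> - Suc t"
    let ?C1 = "fst (ric_aux \<gamma> h H g G Px Pu Pw phi \<tau> ?n)" and ?c1 = "snd (ric_aux \<gamma> h H g G Px Pu Pw phi \<tau> ?n)"
    have "?n \<le> \<tau>" by simp
    from MI[OF this] obtain \<kappa> where sC: "transpose ?C1 = ?C1" and pC: "psd ?C1"
      and cn: "ctg_aux \<gamma> h H g G Px Pu Pw phi \<tau> ?n = (\<lambda>x. (1/2) * (x \<bullet> (?C1 *v x)) + ?c1 \<bullet> x + \<kappa>)" by auto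
    have sH: "transpose (H t) = H t" and pH: "psd (H t)" using assms(2) tl by auto
    have sG: "transpose (G t) = G t" and pG: "psd (G t)" using assms(3) tl by auto
    have bl: "bilinear (phi t)" using assms(4) tl by auto
    note S4 = step(4)[where Px="Px t" and Pu="Pu t" and Pw="Pw t" and g="g t" and cp="?c1" and \<kappa>=\<kappa> and y=y,
       OF assms(1) sC pC sH pH sG pG bl]
    show "let vs = K_gain \<gamma> h H g G Px Pu Pw phi \<tau> t *v y + k_gain \<gamma> h H g G Px Pu Pw phi \<tau> t;
                 obj = bellman_obj \<gamma> (g t) (G t) (Px t) (Pu t) (Pw t) (phi t)
                         (cost_to_go \<gamma> h H g G Px Pu Pw phi \<tau> (Suc t)) y
             in (\<forall>v. obj vs \<le> obj v) \<and> (\<forall>v. obj v = obj vs \<longrightarrow> v = vs)"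
      unfolding Let_def K_gain_def k_gain_def cost_to_go_def C_xx_def c_x_def cn by (rule S4)
  qed
  from P1 P2 show ?thesis by blast
qed


end
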